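(* Let $B\ge 2$ and $\eta\in\mathbb{N}$. Suppose that either $B\ge 3$ and $\gamma_B(\eta+1)>2(B-1)^2$, or $B=2$ and $\gamma_B(\eta+1)\ge B^2=4$. Then $\gamma_B(\eta)<\gamma_B(\eta+1)<\gamma_B(\eta+2)<\cdots<\gamma_B(\eta+k)$ for every $k\in\mathbb{N}$; that is, the sequence $(\gamma_B(n))_{n\ge\eta}$ is strictly increasing.
   Context: Fix an integer base $B \geq 2$. Every integer $x>0$ is written uniquely as $x=\sum_{i=0}^{L(x)-1} x_i B^i$ with digits $0 \le x_i \le B-1$ and $x_{L(x)-1}\neq 0$. Define $\mathcal{H}_B(x)=\sum_{i=0}^{L(x)-1} x_i^2$, $\mathcal{H}_B(0)=0$, $\mathcal{H}_B^0(x)=x$, $\mathcal{H}_B^{n}=\mathcal{H}_B\circ\mathcal{H}_B^{n-1}$. A positive integer $x$ is happy if $\mathcal{H}_B^n(x)=1$ for some $n\in\mathbb{N}$; its height is $\eta_B(x)=\min\{\alpha\in\mathbb{N}:\mathcal{H}_B^\alpha(x)=1\}$. For $n\in\mathbb{N}$, $\gamma_B(n)$ denotes the smallest happy number $x\ge 1$ with $\eta_B(x)=n$. *)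

theory Defs
  imports Main
begin

text \<open>Sum of the squares of the base-B digits of x (H_B), with H_B(0) = 0.
  The guard B < 2 only serves termination; the paper always has B >= 2.\<close>
function happyH :: "nat \<Rightarrow> nat \<Rightarrow> nat" where
  "happyH B x = (if B < 2 \<or> x = 0 then 0 else (x mod B)^2 + happyH B (x div B))"
  by pat_completeness auto
termination
  by (relation "measure (\<lambda>(B, x). x)") auto

declare happyH.simps [simp del]

definition happy :: "nat \<Rightarrow> nat \<Rightarrow> bool" where
  "happy B x \<longleftrightarrow> x > 0 \<and> (\<exists>n. (happyH B ^^ n) x = 1)"

definition height :: "nat \<Rightarrow> nat \<Rightarrow> nat" where
  "height B x = (LEAST a. (happyH B ^^ a) x = 1)"

definition gamma :: "nat \<Rightarrow> nat \<Rightarrow> nat" where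
  "gamma B n = (LEAST x. x \<ge> 1 \<and> happy B x \<and> height B x = n)"

end

theory Submission
  imports Defs
begin

lemma H_eq: "B \<ge> 2 \<Longrightarrow> happyH B x = (x mod B)^2 + happyH B (x div B)"
  by (cases "x = 0") (simp_all add: happyH.simps[of B x] happyH.simps[of B 0])

lemma H_zero: "happyH B 0 = 0"
  by (simp add: happyH.simps)

lemma H_le_lin: assumes "B \<ge> 2" shows "happyH B q \<le> (B - 1) * q"
proof (induction q rule: less_induct)
  case (less q)
  show ?case
  proof (cases "q = 0")
    case True thus ?thesis by (simp add: H_zero)
  next
    case False
    have r: "q mod B < B" using assms by simp
    hence "q mod B \<le> B - 1" by linarith
    hence "(q mod B)^2 \<le> (B - 1) * (q mod B)"
      by (simp add: power2_eq_square mult_right_mono)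
    moreover have "happyH B (q div B) \<le> (B - 1) * (q div B)"
      using less False assms by simp
    moreover have "(B - 1) * (q div B) \<le> (B - 1) * (B * (q div B))"
      using assms by simp
    moreover have e: "(B-1)*(B*(q div B) + q mod B) = (B-1)*(B*(q div B)) + (B-1)*(q mod B)"
      by (rule distrib_left)
    moreover have "B*(q div B) + q mod B = q" by simp
    ultimately show ?thesis
      using H_eq[OF assms, of q] by (metis (no_types, lifting) add_le_mono add.commute order.trans)
  qed
qed

lemma H_small: assumes "B \<ge> 2" "x < B^2" shows "happyH B x \<le> 2 * (B - 1)^2"
proof -
  have q: "x div B < B" using assms by (simp add: less_mult_imp_div_less power2_eq_square)
  have "happyH B (x div B) = (x div B)^2"
    using H_eq[OF assms(1), of "x div B"] q by (simp add: H_zero)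
  moreover have "x div B \<le> B - 1" using q by linarith
  hence "(x div B)^2 \<le> (B-1)^2" by (rule power_mono) simp
  moreover have "x mod B < B" using assms(1) by simp
  hence "x mod B \<le> B - 1" by linarith
  hence "(x mod B)^2 \<le> (B-1)^2" by (rule power_mono) simp
  ultimately show ?thesis using H_eq[OF assms(1), of x] by linarith
qed

lemma H_big: assumes "B \<ge> 2" "x \<ge> B^2" shows "happyH B x < x"
proof -
  define q where "q = x div B"
  define r where "r = x mod B"
  define q' where "q' = q div B"
  define r' where "r' = q mod B"
  have x1: "x = B*q + r" unfolding q_def r_def by simp
  have q1: "q = B*q' + r'" unfolding q'_def r'_def by simp
  have xe: "x = B*B*q' + B*r' + r" using x1 q1 by (simp add: algebra_simps)
  have rB: "r < B" "r' < B" using assms(1) unfolding r_def r'_def by auto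
  have "B*B \<le> x" using assms(2) by (simp add: power2_eq_square)
  hence "(B*B) div B \<le> q" unfolding q_def by (rule div_le_mono)
  hence qB: "B \<le> q" using assms(1) by simp
  hence "B div B \<le> q'" unfolding q'_def by (rule div_le_mono)
  hence qq: "1 \<le> q'" using assms(1) by simp
  have Hx: "happyH B x = r^2 + r'^2 + happyH B q'"
    using H_eq[OF assms(1), of x] H_eq[OF assms(1), of q] unfolding r_def r'_def q_def q'_def by simp
  have a: "happyH B q' \<le> (B-1)*q'" by (rule H_le_lin[OF assms(1)])
  have b: "r'*r' \<le> B*r'" using rB by simp
  have rle: "r \<le> B - 1" using rB by linarith
  have c: "r*r \<le> (B-1)*(B-1)" using rle by (simp add: mult_le_mono)
  obtain c0 where c0: "B = Suc c0" using assms(1) by (cases B) auto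
  obtain p where p: "q' = Suc p" using qq by (cases q') auto
  have d: "(B-1)*q' + (B-1)*(B-1) < B*B*q'" unfolding c0 p by (simp add: algebra_simps)
  have "r*r \<le> r*(B-1)" using rle by simp
  have rr: "r*r \<le> r + r*(B-1) - r" using \<open>r*r \<le> r*(B-1)\<close> by simp
  have Hx': "happyH B x = r*r + r'*r' + happyH B q'" using Hx by (simp add: power2_eq_square)
  show ?thesis using Hx' a b c d xe by linarith
qed

lemma H_lt: assumes "B \<ge> 2" "x > 2*(B-1)^2" shows "happyH B x < x"
  using H_big[OF assms(1)] H_small[OF assms(1)] assms(2) by (meson leI le_less_trans)

lemma H_stay: assumes "B \<ge> 2" "x \<le> 2*(B-1)^2" shows "happyH B x \<le> 2*(B-1)^2"
  using H_big[OF assms(1)] H_small[OF assms(1)] assms(2) by (meson leI less_imp_le order.trans)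

lemma height_down:
  assumes "happy B x" "height B x = Suc n"
  shows "happyH B x \<ge> 1 \<and> happy B (happyH B x) \<and> height B (happyH B x) = n"
proof -
  let ?f = "happyH B"
  obtain a where a: "(?f ^^ a) x = 1" using assms(1) unfolding happy_def by blast
  have h: "(?f ^^ Suc n) x = 1" using LeastI[of "\<lambda>a. (?f ^^ a) x = 1", OF a] assms(2)
    unfolding height_def by simp
  hence h2: "(?f ^^ n) (?f x) = 1" by (simp add: funpow_Suc_right del: funpow.simps)
  have z: "(?f ^^ m) 0 = 0" for m by (induction m) (simp_all add: H_zero)
  have "?f x \<noteq> 0"
  proof
    assume "?f x = 0" thus False using h2 z[of n] by simp
  qed
  hence pos: "?f x \<ge> 1" by simp
  have "(LEAST a. (?f ^^ a) (?f x) = 1) = n"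
  proof (rule Least_equality)
    show "(?f ^^ n) (?f x) = 1" by (rule h2)
  next
    fix m assume "(?f ^^ m) (?f x) = 1"
    hence "(?f ^^ Suc m) x = 1" by (simp add: funpow_Suc_right del: funpow.simps)
    hence "Suc n \<le> Suc m" using assms(2) Least_le[of "\<lambda>a. (?f ^^ a) x = 1" "Suc m"] unfolding height_def by simp
    thus "n \<le> m" by simp
  qed
  thus ?thesis using pos h2 unfolding happy_def height_def by auto
qed

lemma height_up:
  assumes "happy B x" "height B x = n" "happyH B y = x" "y \<noteq> 1" "y > 0"
  shows "happy B y \<and> height B y = Suc n"
proof -
  let ?f = "happyH B"
  obtain a where a: "(?f ^^ a) x = 1" using assms(1) unfolding happy_def by blast
  have h: "(?f ^^ n) x = 1" using LeastI[of "\<lambda>a. (?f ^^ a) x = 1", OF a] assms(2)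
    unfolding height_def by simp
  hence h2: "(?f ^^ Suc n) y = 1" using assms(3) by (simp add: funpow_Suc_right del: funpow.simps)
  have "(LEAST a. (?f ^^ a) y = 1) = Suc n"
  proof (rule Least_equality)
    show "(?f ^^ Suc n) y = 1" by (rule h2)
  next
    fix m assume m: "(?f ^^ m) y = 1"
    show "Suc n \<le> m"
    proof (cases m)
      case 0 thus ?thesis using m assms(4) by simp
    next
      case (Suc m')
      hence "(?f ^^ m') x = 1" using m assms(3) by (simp add: funpow_Suc_right del: funpow.simps)
      hence "n \<le> m'" using assms(2) Least_le[of "\<lambda>a. (?f ^^ a) x = 1" m'] unfolding height_def by simp
      thus ?thesis using Suc by simp
    qed
  qed
  thus ?thesis using h2 assms(5) unfolding happy_def height_def by blast
qed

fun rep :: "nat \<Rightarrow> nat \<Rightarrow> nat" where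
  "rep B 0 = 0" | "rep B (Suc k) = B * rep B k + 1"

lemma H_rep: "B \<ge> 2 \<Longrightarrow> happyH B (rep B k) = k"
proof (induction k)
  case 0 thus ?case by (simp add: H_zero)
next
  case (Suc k)
  have "(1 + B * rep B k) mod B = 1" using Suc.prems by (simp only: mod_mult_self2) simp
  moreover have "(1 + B * rep B k) div B = rep B k" using Suc.prems by (simp only: div_mult_self2) simp
  ultimately have "(B * rep B k + 1) mod B = 1" "(B * rep B k + 1) div B = rep B k" by (simp_all add: add.commute)
  thus ?case using H_eq[OF Suc.prems, of "B * rep B k + 1"] Suc by simp
qed

lemma exists_height: assumes "B \<ge> 2" shows "\<exists>x. x \<ge> 1 \<and> happy B x \<and> height B x = n"
proof (induction n)
  case 0
  have "happy B 1" unfolding happy_def by (metis funpow_0 zero_less_one)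
  moreover have "height B 1 = 0" unfolding height_def by simp
  ultimately show ?case by blast
next
  case (Suc n)
  then obtain x where x: "x \<ge> 1" "happy B x" "height B x = n" by blast
  define y where "y = B * rep B x"
  have "happyH B y = x" unfolding y_def using H_eq[OF assms, of "B * rep B x"] H_rep[OF assms] assms by simp
  moreover have "rep B x \<ge> 1" using x(1) by (cases x) auto
  hence "y \<ge> 2" unfolding y_def using assms by (metis mult_le_mono nat_mult_1_right)
  ultimately have "happy B y \<and> height B y = Suc n" using height_up[OF x(2,3)] by simp
  thus ?case using \<open>y \<ge> 2\<close> by (intro exI[of _ y]) simp
qed

lemma gamma_prop: assumes "B \<ge> 2" shows "gamma B n \<ge> 1 \<and> happy B (gamma B n) \<and> height B (gamma B n) = n"
  using exists_height[OF assms, of n] unfolding gamma_def by (metis (mono_tags, lifting) LeastI)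

lemma gamma_le: "x \<ge> 1 \<Longrightarrow> happy B x \<Longrightarrow> height B x = n \<Longrightarrow> gamma B n \<le> x"
  unfolding gamma_def by (metis (mono_tags, lifting) Least_le)

theorem lemma2p3:
  fixes B \<eta> :: nat
  assumes "B \<ge> 2"
    and "(B \<ge> 3 \<and> gamma B (\<eta> + 1) > 2 * (B - 1)^2) \<or> (B = 2 \<and> gamma B (\<eta> + 1) \<ge> 4)"
  shows "strict_mono_on {\<eta>..} (gamma B)"
proof -
  define T where "T = 2 * (B - 1)^2"
  have T0: "gamma B (\<eta> + 1) > T" using assms(2) unfolding T_def by auto
  have C: "gamma B (\<eta> + 1 + k) > T" for k
  proof (induction k)
    case 0 thus ?case using T0 by simp
  next
    case (Suc k)
    let ?g = "gamma B (\<eta> + 1 + Suc k)"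
    have P: "?g \<ge> 1 \<and> happy B ?g \<and> height B ?g = Suc (\<eta> + 1 + k)" using gamma_prop[OF assms(1)] by simp
    have D: "happyH B ?g \<ge> 1 \<and> happy B (happyH B ?g) \<and> height B (happyH B ?g) = \<eta> + 1 + k"
      using height_down[of B ?g "\<eta> + 1 + k"] P by simp
    hence "gamma B (\<eta> + 1 + k) \<le> happyH B ?g" using gamma_le[of "happyH B ?g" B "\<eta> + 1 + k"] by simp
    show ?case
    proof (rule ccontr)
      assume "\<not> T < ?g"
      hence "happyH B ?g \<le> T" using H_stay[OF assms(1)] unfolding T_def by simp
      thus False using Suc.IH \<open>gamma B (\<eta> + 1 + k) \<le> happyH B ?g\<close> by simp
    qed
  qed
  have step: "gamma B (\<eta> + k) < gamma B (\<eta> + Suc k)" for k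
  proof -
    let ?g = "gamma B (\<eta> + 1 + k)"
    have P: "?g \<ge> 1 \<and> happy B ?g \<and> height B ?g = Suc (\<eta> + k)" using gamma_prop[OF assms(1)] by simp
    have D: "happyH B ?g \<ge> 1 \<and> happy B (happyH B ?g) \<and> height B (happyH B ?g) = \<eta> + k"
      using height_down[of B ?g "\<eta> + k"] P by simp
    hence "gamma B (\<eta> + k) \<le> happyH B ?g" using gamma_le[of "happyH B ?g" B "\<eta> + k"] by simp
    moreover have "happyH B ?g < ?g" using H_lt[OF assms(1)] C[of k] unfolding T_def by simp
    ultimately show ?thesis by simp
  qed
  have mono: "gamma B (\<eta> + i) < gamma B (\<eta> + i + Suc d)" for i d
  proof (induction d)
    case 0 thus ?case using step[of i] by simp
  next
    case (Suc d) thus ?case using step[of "i + Suc d"] by (simp add: add.assoc)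
  qed
  show ?thesis unfolding strict_mono_on_def
  proof (intro allI impI)
    fix m n assume "m \<in> {\<eta>..} \<and> n \<in> {\<eta>..} \<and> m < n"
    hence mn: "\<eta> \<le> m" "m < n" by auto
    define i where "i = m - \<eta>"
    define d where "d = n - m - 1"
    have "m = \<eta> + i" "n = \<eta> + i + Suc d" using mn unfolding i_def d_def by auto
    thus "gamma B m < gamma B n" using mono by simp
  qed
qed

end
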